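(* Let $\pi$ be a skew-merged permutation with no central elements and $\tau$ a skew-merged permutation. If $e_1$ and $e_2$ are embeddings of $\pi$ into $\tau$, then the map $e_1\wedge e_2$ defined by $(e_1\wedge e_2)(x)=\mathit{outer}\{e_1(x),e_2(x)\}$ for all points $x$ of $\pi$ is also an embedding of $\pi$ into $\tau$.
   Context: Permutations are identified with their sets of points $(i,\sigma(i))$; an embedding is an injective map between point sets preserving relative horizontal and vertical order of every pair. A permutation is skew-merged if its points can be partitioned into an increasing and a decreasing subsequence. An element is of type NE if it plays the $3$ in an occurrence of $213$, NW if it plays the $3$ in an occurrence of $312$, SW if it plays the $1$ in an occurrence of $132$, SE if it plays the $1$ in an occurrence of $231$, and central otherwise; the four non-central types are pairwise disjoint, SW and NE elements form increasing sequences, NW and SE elements form decreasing sequences, and embeddings between skew-merged permutations preserve the type of non-central elements. For two non-central elements $x,y$ of the same type, $x\lhd y$ means $x$ lies strictly further out from the centre than $y$: for type SW, $x$ is left of and below $y$; for NE, $x$ is right of and above $y$; for NW, $x$ is left of and above $y$; for SE, $x$ is right of and below $y$. $\mathit{outer}$ of two elements of the same type is the $\lhd$-minimum (the one further out), or the common element if equal. *)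

theory Defs
  imports Main
begin

text \<open>A permutation of length n (a bijection of {1..n}) is identified with its point set.\<close>
definition perm_points :: "nat \<Rightarrow> (nat \<Rightarrow> nat) \<Rightarrow> (nat \<times> nat) set" where
  "perm_points n \<sigma> = {(i, \<sigma> i) | i. i \<in> {1..n}}"

definition is_perm :: "nat \<Rightarrow> (nat \<Rightarrow> nat) \<Rightarrow> bool" where
  "is_perm n \<sigma> \<longleftrightarrow> bij_betw \<sigma> {1..n} {1..n}"

definition embedding ::
  "(nat \<times> nat) set \<Rightarrow> (nat \<times> nat) set \<Rightarrow> ((nat \<times> nat) \<Rightarrow> (nat \<times> nat)) \<Rightarrow> bool" where
  "embedding P Q e \<longleftrightarrow> inj_on e P \<and> e ` P \<subseteq> Q \<and>
     (\<forall>p\<in>P. \<forall>q\<in>P. (fst p < fst q \<longleftrightarrow> fst (e p) < fst (e q)) \<and>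
                     (snd p < snd q \<longleftrightarrow> snd (e p) < snd (e q)))"

definition increasing_pts :: "(nat \<times> nat) set \<Rightarrow> bool" where
  "increasing_pts A \<longleftrightarrow> (\<forall>p\<in>A. \<forall>q\<in>A. fst p < fst q \<longrightarrow> snd p < snd q)"

definition decreasing_pts :: "(nat \<times> nat) set \<Rightarrow> bool" where
  "decreasing_pts A \<longleftrightarrow> (\<forall>p\<in>A. \<forall>q\<in>A. fst p < fst q \<longrightarrow> snd p > snd q)"

definition skew_merged :: "(nat \<times> nat) set \<Rightarrow> bool" where
  "skew_merged P \<longleftrightarrow> (\<exists>A B. A \<union> B = P \<and> A \<inter> B = {} \<and> increasing_pts A \<and> decreasing_pts B)"

datatype ptype = NE | NW | SW | SE

fun has_type :: "(nat \<times> nat) set \<Rightarrow> ptype \<Rightarrow> (nat \<times> nat) \<Rightarrow> bool" where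
  \<comment> \<open>x plays the 3 in 213\<close>
  "has_type P NE x \<longleftrightarrow> x \<in> P \<and> (\<exists>a\<in>P. \<exists>b\<in>P.
      fst a < fst b \<and> fst b < fst x \<and> snd b < snd a \<and> snd a < snd x)"
  \<comment> \<open>x plays the 3 in 312\<close>
| "has_type P NW x \<longleftrightarrow> x \<in> P \<and> (\<exists>a\<in>P. \<exists>b\<in>P.
      fst x < fst a \<and> fst a < fst b \<and> snd a < snd b \<and> snd b < snd x)"
  \<comment> \<open>x plays the 1 in 132\<close>
| "has_type P SW x \<longleftrightarrow> x \<in> P \<and> (\<exists>a\<in>P. \<exists>b\<in>P.
      fst x < fst a \<and> fst a < fst b \<and> snd x < snd b \<and> snd b < snd a)"
  \<comment> \<open>x plays the 1 in 231\<close>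
| "has_type P SE x \<longleftrightarrow> x \<in> P \<and> (\<exists>a\<in>P. \<exists>b\<in>P.
      fst a < fst b \<and> fst b < fst x \<and> snd x < snd a \<and> snd a < snd b)"

definition central :: "(nat \<times> nat) set \<Rightarrow> (nat \<times> nat) \<Rightarrow> bool" where
  "central P x \<longleftrightarrow> x \<in> P \<and> (\<forall>T. \<not> has_type P T x)"

text \<open>x \<lhd> y: x lies strictly further out from the centre than y.\<close>
fun further_out :: "ptype \<Rightarrow> (nat \<times> nat) \<Rightarrow> (nat \<times> nat) \<Rightarrow> bool" where
  "further_out SW x y \<longleftrightarrow> fst x < fst y \<and> snd x < snd y"
| "further_out NE x y \<longleftrightarrow> fst x > fst y \<and> snd x > snd y"
| "further_out NW x y \<longleftrightarrow> fst x < fst y \<and> snd x > snd y"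
| "further_out SE x y \<longleftrightarrow> fst x > fst y \<and> snd x < snd y"

text \<open>outer of two elements of Q of the same type: the \<lhd>-minimum, or the common element.\<close>
definition outer :: "(nat \<times> nat) set \<Rightarrow> (nat \<times> nat) \<Rightarrow> (nat \<times> nat) \<Rightarrow> (nat \<times> nat)" where
  "outer Q u v = (if \<exists>T. has_type Q T u \<and> has_type Q T v \<and> further_out T v u then v else u)"

definition meet_emb ::
  "(nat \<times> nat) set \<Rightarrow> ((nat \<times> nat) \<Rightarrow> (nat \<times> nat)) \<Rightarrow> ((nat \<times> nat) \<Rightarrow> (nat \<times> nat))
     \<Rightarrow> (nat \<times> nat) \<Rightarrow> (nat \<times> nat)" where
  "meet_emb Q e1 e2 = (\<lambda>x. outer Q (e1 x) (e2 x))"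

end

theory Submission imports Defs begin

definition sm_split where
 "sm_split Q A B \<longleftrightarrow> A \<union> B = Q \<and> A \<inter> B = {} \<and> increasing_pts A \<and> decreasing_pts B"

definition pl where
 "pl Q \<longleftrightarrow> (\<forall>p\<in>Q. \<forall>q\<in>Q. (fst p = fst q \<longrightarrow> p = q) \<and> (snd p = snd q \<longrightarrow> p = q))"

lemma wSW: assumes "sm_split Q A B" "has_type Q SW x"
  shows "x \<in> A \<and> (\<exists>b\<in>B. fst x < fst b \<and> snd x < snd b)"
  using assms unfolding sm_split_def increasing_pts_def decreasing_pts_def
  apply simp
  by (metis UnE less_trans order.asym)

lemma wNE: assumes "sm_split Q A B" "has_type Q NE x"
  shows "x \<in> A \<and> (\<exists>b\<in>B. fst b < fst x \<and> snd b < snd x)"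
  using assms unfolding sm_split_def increasing_pts_def decreasing_pts_def
  apply simp
  by (metis UnE less_trans order.asym)

lemma wNW: assumes "sm_split Q A B" "has_type Q NW x"
  shows "x \<in> B \<and> (\<exists>b\<in>A. fst x < fst b \<and> snd b < snd x)"
  using assms unfolding sm_split_def increasing_pts_def decreasing_pts_def
  apply simp
  by (metis UnE less_trans order.asym)

lemma wSE: assumes "sm_split Q A B" "has_type Q SE x"
  shows "x \<in> B \<and> (\<exists>b\<in>A. fst b < fst x \<and> snd x < snd b)"
  using assms unfolding sm_split_def increasing_pts_def decreasing_pts_def
  apply simp
  by (metis UnE less_trans order.asym)

lemma incD: "increasing_pts A \<Longrightarrow> p \<in> A \<Longrightarrow> q \<in> A \<Longrightarrow> fst p < fst q \<Longrightarrow> snd p < snd q"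
  unfolding increasing_pts_def by blast
lemma decD: "decreasing_pts A \<Longrightarrow> p \<in> A \<Longrightarrow> q \<in> A \<Longrightarrow> fst p < fst q \<Longrightarrow> snd q < snd p"
  unfolding decreasing_pts_def by blast

lemma AB: "sm_split Q A B \<Longrightarrow> x \<in> A \<Longrightarrow> x \<in> B \<Longrightarrow> False"
  unfolding sm_split_def by blast

lemma notSWNE: assumes "sm_split Q A B" "has_type Q SW x" "has_type Q NE x" shows False
proof -
  obtain b where b: "b \<in> B" "fst x < fst b" "snd x < snd b" using wSW[OF assms(1,2)] by blast
  obtain c where c: "c \<in> B" "fst c < fst x" "snd c < snd x" using wNE[OF assms(1,3)] by blast
  have "decreasing_pts B" using assms(1) unfolding sm_split_def by blast
  from decD[OF this c(1) b(1)] b c show False by linarith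
qed

lemma notNWSE: assumes "sm_split Q A B" "has_type Q NW x" "has_type Q SE x" shows False
proof -
  obtain b where b: "b \<in> A" "fst x < fst b" "snd b < snd x" using wNW[OF assms(1,2)] by blast
  obtain c where c: "c \<in> A" "fst c < fst x" "snd x < snd c" using wSE[OF assms(1,3)] by blast
  have "increasing_pts A" using assms(1) unfolding sm_split_def by blast
  from incD[OF this c(1) b(1)] b c show False by linarith
qed

lemma typ_unique: assumes "sm_split Q A B" "has_type Q T x" "has_type Q T' x"
  shows "T = T'"
proof (cases T; cases T')
qed (use assms notSWNE[OF assms(1)] notNWSE[OF assms(1)] AB[OF assms(1)]
       wSW[OF assms(1)] wNE[OF assms(1)] wNW[OF assms(1)] wSE[OF assms(1)] in blast)+

lemma smD: "sm_split Q A B \<Longrightarrow> increasing_pts A" "sm_split Q A B \<Longrightarrow> decreasing_pts B"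
  unfolding sm_split_def by blast+

lemma typ_in: "has_type Q T x \<Longrightarrow> x \<in> Q" by (cases T) auto

lemma F3a: assumes "sm_split Q A B" "pl Q" "has_type Q T x" "has_type Q T' y"
  "T = SW \<or> T = NW" "T' = NE \<or> T' = SE"
  shows "fst x < fst y"
proof -
  have I: "increasing_pts A" and D: "decreasing_pts B" using smD[OF assms(1)] by auto
  have xy: "x \<noteq> y" using typ_unique[OF assms(1), of T x T'] assms(3-6) by auto
  have "fst x \<noteq> fst y" using assms(2) xy typ_in[OF assms(3)] typ_in[OF assms(4)] unfolding pl_def by blast
  moreover have "\<not> fst y < fst x"
  proof
    assume yx: "fst y < fst x"
    show False
      using assms(5,6)
    proof (elim disjE)
      assume "T = SW" "T' = NE"
      then obtain b c where x: "x \<in> A" "b \<in> B" "fst x < fst b" "snd x < snd b"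
        and y: "y \<in> A" "c \<in> B" "fst c < fst y" "snd c < snd y"
        using wSW[OF assms(1)] wNE[OF assms(1)] assms(3,4) by blast
      have "snd y < snd x" using incD[OF I y(1) x(1) yx] .
      moreover have "snd b < snd c" using decD[OF D y(2) x(2)] x y yx by linarith
      ultimately show False using x y by linarith
    next
      assume "T = SW" "T' = SE"
      then obtain b c where x: "x \<in> A" "b \<in> B" "fst x < fst b" "snd x < snd b"
        and y: "y \<in> B" "c \<in> A" "fst c < fst y" "snd y < snd c"
        using wSW[OF assms(1)] wSE[OF assms(1)] assms(3,4) by blast
      have "snd b < snd y" using decD[OF D y(1) x(2)] x yx by linarith
      moreover have "snd c < snd x" using incD[OF I y(2) x(1)] y yx by linarith
      ultimately show False using x y by linarith
    next
      assume "T = NW" "T' = NE"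
      then obtain b c where x: "x \<in> B" "b \<in> A" "fst x < fst b" "snd b < snd x"
        and y: "y \<in> A" "c \<in> B" "fst c < fst y" "snd c < snd y"
        using wNW[OF assms(1)] wNE[OF assms(1)] assms(3,4) by blast
      have "snd x < snd c" using decD[OF D y(2) x(1)] y yx by linarith
      moreover have "snd y < snd b" using incD[OF I y(1) x(2)] x yx by linarith
      ultimately show False using x y by linarith
    next
      assume "T = NW" "T' = SE"
      then obtain b c where x: "x \<in> B" "b \<in> A" "fst x < fst b" "snd b < snd x"
        and y: "y \<in> B" "c \<in> A" "fst c < fst y" "snd y < snd c"
        using wNW[OF assms(1)] wSE[OF assms(1)] assms(3,4) by blast
      have "snd x < snd y" using decD[OF D y(1) x(1) yx] .
      moreover have "snd c < snd b" using incD[OF I y(2) x(2)] x y yx by linarith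
      ultimately show False using x y by linarith
    qed
  qed
  ultimately show ?thesis by simp
qed

lemma F3b: assumes "sm_split Q A B" "pl Q" "has_type Q T x" "has_type Q T' y"
  "T = SW \<or> T = SE" "T' = NE \<or> T' = NW"
  shows "snd x < snd y"
proof -
  have I: "increasing_pts A" and D: "decreasing_pts B" using smD[OF assms(1)] by auto
  have xy: "x \<noteq> y" using typ_unique[OF assms(1), of T x T'] assms(3-6) by auto
  have sne: "snd x \<noteq> snd y" and fne: "fst x \<noteq> fst y"
    using assms(2) xy typ_in[OF assms(3)] typ_in[OF assms(4)] unfolding pl_def by blast+
  moreover have "\<not> snd y < snd x"
  proof
    assume yx: "snd y < snd x"
    show False
      using assms(5,6)
    proof (elim disjE)
      assume "T = SW" "T' = NE"
      then obtain b c where x: "x \<in> A" "b \<in> B" "fst x < fst b" "snd x < snd b"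
        and y: "y \<in> A" "c \<in> B" "fst c < fst y" "snd c < snd y"
        using wSW[OF assms(1)] wNE[OF assms(1)] assms(3,4) by blast
      have f: "fst y < fst x" using incD[OF I x(1) y(1)] fne yx by linarith
      have "snd b < snd c" using decD[OF D y(2) x(2)] x y f by linarith
      then show False using x y yx by linarith
    next
      assume "T = SW" "T' = NW"
      then obtain b c where x: "x \<in> A" "b \<in> B" "fst x < fst b" "snd x < snd b"
        and y: "y \<in> B" "c \<in> A" "fst y < fst c" "snd c < snd y"
        using wSW[OF assms(1)] wNW[OF assms(1)] assms(3,4) by blast
      have f: "fst b \<le> fst y" using decD[OF D y(1) x(2)] x yx by linarith
      have "snd x < snd c" using incD[OF I x(1) y(2)] x y f by linarith
      then show False using x y yx by linarith
    next
      assume "T = SE" "T' = NE"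
      then obtain b c where x: "x \<in> B" "b \<in> A" "fst b < fst x" "snd x < snd b"
        and y: "y \<in> A" "c \<in> B" "fst c < fst y" "snd c < snd y"
        using wSE[OF assms(1)] wNE[OF assms(1)] assms(3,4) by blast
      have f: "fst y \<le> fst b" using incD[OF I x(2) y(1)] x yx by linarith
      have "snd x < snd c" using decD[OF D y(2) x(1)] x y f by linarith
      then show False using x y yx by linarith
    next
      assume "T = SE" "T' = NW"
      then obtain b c where x: "x \<in> B" "b \<in> A" "fst b < fst x" "snd x < snd b"
        and y: "y \<in> B" "c \<in> A" "fst y < fst c" "snd c < snd y"
        using wSE[OF assms(1)] wNW[OF assms(1)] assms(3,4) by blast
      have f: "fst x < fst y" using decD[OF D y(1) x(1)] fne yx by linarith
      have "snd b < snd c" using incD[OF I x(2) y(2)] x y f by linarith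
      then show False using x y yx by linarith
    qed
  qed
  ultimately show ?thesis by simp
qed

lemma perm_pl: assumes "is_perm n \<sigma>" shows "pl (perm_points n \<sigma>)"
proof -
  have inj: "inj_on \<sigma> {1..n}" using assms unfolding is_perm_def bij_betw_def by blast
  show ?thesis unfolding pl_def
  proof (intro ballI conjI impI)
    fix p q assume p: "p \<in> perm_points n \<sigma>" and q: "q \<in> perm_points n \<sigma>"
    obtain i where i: "p = (i, \<sigma> i)" "i \<in> {1..n}" using p unfolding perm_points_def by blast
    obtain j where j: "q = (j, \<sigma> j)" "j \<in> {1..n}" using q unfolding perm_points_def by blast
    show "p = q" if "fst p = fst q" using that i j by simp
    show "p = q" if "snd p = snd q" using that i j inj by (simp add: inj_on_eq_iff)
  qed
qed

lemma sm_ex: "skew_merged Q \<Longrightarrow> \<exists>A B. sm_split Q A B"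
  unfolding skew_merged_def sm_split_def by blast

lemma type_pres: assumes "embedding P Q e" "has_type P T x" shows "has_type Q T (e x)"
proof -
  have im: "\<And>y. y \<in> P \<Longrightarrow> e y \<in> Q" using assms(1) unfolding embedding_def by blast
  have o: "\<And>p q. p \<in> P \<Longrightarrow> q \<in> P \<Longrightarrow> (fst p < fst q \<longleftrightarrow> fst (e p) < fst (e q)) \<and>
                     (snd p < snd q \<longleftrightarrow> snd (e p) < snd (e q))"
    using assms(1) unfolding embedding_def by blast
  show ?thesis
  proof (cases T)
    case NE
    then obtain a b where h: "x \<in> P" "a \<in> P" "b \<in> P" "fst a < fst b" "fst b < fst x" "snd b < snd a" "snd a < snd x"
      using assms(2) by auto
    have "fst (e a) < fst (e b)" "fst (e b) < fst (e x)" "snd (e b) < snd (e a)" "snd (e a) < snd (e x)"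
      using o[of a b] o[of b x] o[of b a] o[of a x] h by auto
    moreover have "e a \<in> Q" "e b \<in> Q" "e x \<in> Q" using im h by auto
    ultimately show ?thesis unfolding NE has_type.simps by blast
  next
    case NW
    then obtain a b where h: "x \<in> P" "a \<in> P" "b \<in> P" "fst x < fst a" "fst a < fst b" "snd a < snd b" "snd b < snd x"
      using assms(2) by auto
    have "fst (e x) < fst (e a)" "fst (e a) < fst (e b)" "snd (e a) < snd (e b)" "snd (e b) < snd (e x)"
      using o[of x a] o[of a b] o[of b x] h by auto
    moreover have "e a \<in> Q" "e b \<in> Q" "e x \<in> Q" using im h by auto
    ultimately show ?thesis unfolding NW has_type.simps by blast
  next
    case SW
    then obtain a b where h: "x \<in> P" "a \<in> P" "b \<in> P" "fst x < fst a" "fst a < fst b" "snd x < snd b" "snd b < snd a"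
      using assms(2) by auto
    have "fst (e x) < fst (e a)" "fst (e a) < fst (e b)" "snd (e x) < snd (e b)" "snd (e b) < snd (e a)"
      using o[of x a] o[of a b] o[of x b] o[of b a] h by auto
    moreover have "e a \<in> Q" "e b \<in> Q" "e x \<in> Q" using im h by auto
    ultimately show ?thesis unfolding SW has_type.simps by blast
  next
    case SE
    then obtain a b where h: "x \<in> P" "a \<in> P" "b \<in> P" "fst a < fst b" "fst b < fst x" "snd x < snd a" "snd a < snd b"
      using assms(2) by auto
    have "fst (e a) < fst (e b)" "fst (e b) < fst (e x)" "snd (e x) < snd (e a)" "snd (e a) < snd (e b)"
      using o[of a b] o[of b x] o[of x a] o[of a b] h by auto
    moreover have "e a \<in> Q" "e b \<in> Q" "e x \<in> Q" using im h by auto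
    ultimately show ?thesis unfolding SE has_type.simps by blast
  qed
qed

definition leo where "leo T w u \<longleftrightarrow> w = u \<or> further_out T w u"

lemma same_cmp: assumes "sm_split Q A B" "pl Q" "has_type Q T u" "has_type Q T v" "u \<noteq> v"
  shows "further_out T u v \<or> further_out T v u"
proof -
  have I: "increasing_pts A" and D: "decreasing_pts B" using smD[OF assms(1)] by auto
  have f: "fst u \<noteq> fst v" using assms(2,5) typ_in[OF assms(3)] typ_in[OF assms(4)] unfolding pl_def by blast
  show ?thesis
  proof (cases T)
    case NE
    then have "u \<in> A" "v \<in> A" using wNE[OF assms(1)] assms(3,4) by auto
    moreover have "fst u < fst v \<or> fst v < fst u" using f by arith
    ultimately show ?thesis using NE incD[OF I, of u v] incD[OF I, of v u] by auto
  next
    case SW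
    then have "u \<in> A" "v \<in> A" using wSW[OF assms(1)] assms(3,4) by auto
    moreover have "fst u < fst v \<or> fst v < fst u" using f by arith
    ultimately show ?thesis using SW incD[OF I, of u v] incD[OF I, of v u] by auto
  next
    case NW
    then have "u \<in> B" "v \<in> B" using wNW[OF assms(1)] assms(3,4) by auto
    moreover have "fst u < fst v \<or> fst v < fst u" using f by arith
    ultimately show ?thesis using NW decD[OF D, of u v] decD[OF D, of v u] by auto
  next
    case SE
    then have "u \<in> B" "v \<in> B" using wSE[OF assms(1)] assms(3,4) by auto
    moreover have "fst u < fst v \<or> fst v < fst u" using f by arith
    ultimately show ?thesis using SE decD[OF D, of u v] decD[OF D, of v u] by auto
  qed
qed

lemma outer_prop: assumes "sm_split Q A B" "pl Q" "has_type Q T u" "has_type Q T v"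
  shows "(outer Q u v = u \<or> outer Q u v = v) \<and> leo T (outer Q u v) u \<and> leo T (outer Q u v) v"
proof (cases "\<exists>T'. has_type Q T' u \<and> has_type Q T' v \<and> further_out T' v u")
  case True
  then obtain T' where T': "has_type Q T' u" "further_out T' v u" by blast
  have "T' = T" using typ_unique[OF assms(1) T'(1) assms(3)] .
  then show ?thesis using True T' unfolding outer_def leo_def by auto
next
  case False
  then have nf: "\<not> further_out T v u" using assms(3,4) by blast
  have "u = v \<or> further_out T u v" using same_cmp[OF assms] nf by blast
  then show ?thesis using False unfolding outer_def leo_def by auto
qed

lemma leo_fst1: "leo T w u \<Longrightarrow> T = SW \<or> T = NW \<Longrightarrow> fst w \<le> fst u"
  unfolding leo_def by auto
lemma leo_fst2: "leo T w u \<Longrightarrow> T = NE \<or> T = SE \<Longrightarrow> fst u \<le> fst w"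
  unfolding leo_def by auto
lemma leo_snd1: "leo T w u \<Longrightarrow> T = SW \<or> T = SE \<Longrightarrow> snd w \<le> snd u"
  unfolding leo_def by auto
lemma leo_snd2: "leo T w u \<Longrightarrow> T = NE \<or> T = NW \<Longrightarrow> snd u \<le> snd w"
  unfolding leo_def by auto

theorem lemma3:
  fixes n m :: nat and \<pi> \<tau> :: "nat \<Rightarrow> nat"
    and e1 e2 :: "nat \<times> nat \<Rightarrow> nat \<times> nat"
  assumes "is_perm n \<pi>" and "is_perm m \<tau>"
    and "skew_merged (perm_points n \<pi>)" and "skew_merged (perm_points m \<tau>)"
    and "\<forall>x\<in>perm_points n \<pi>. \<not> central (perm_points n \<pi>) x"
    and "embedding (perm_points n \<pi>) (perm_points m \<tau>) e1"
    and "embedding (perm_points n \<pi>) (perm_points m \<tau>) e2"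
  shows "embedding (perm_points n \<pi>) (perm_points m \<tau>) (meet_emb (perm_points m \<tau>) e1 e2)"
proof -
  define P where "P = perm_points n \<pi>"
  define Q where "Q = perm_points m \<tau>"
  define e where "e = meet_emb Q e1 e2"
  have plP: "pl P" using perm_pl[OF assms(1)] P_def by simp
  have plQ: "pl Q" using perm_pl[OF assms(2)] Q_def by simp
  obtain A' B' where sP: "sm_split P A' B'" using sm_ex assms(3) P_def by blast
  obtain A B where sQ: "sm_split Q A B" using sm_ex assms(4) Q_def by blast
  have E1: "embedding P Q e1" and E2: "embedding P Q e2" using assms(6,7) P_def Q_def by auto
  define ty where "ty x = (SOME T. has_type P T x)" for x
  have tyP: "has_type P (ty x) x" if "x \<in> P" for x
  proof -
    have "\<exists>T. has_type P T x" using assms(5) that P_def unfolding central_def by blast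
    then show ?thesis unfolding ty_def by (rule someI_ex)
  qed
  have key: "(e x = e1 x \<or> e x = e2 x) \<and> leo (ty x) (e x) (e1 x) \<and> leo (ty x) (e x) (e2 x)"
    if "x \<in> P" for x
    using outer_prop[OF sQ plQ type_pres[OF E1 tyP[OF that]] type_pres[OF E2 tyP[OF that]]]
    unfolding e_def meet_emb_def by simp
  have o1: "\<And>p q. p \<in> P \<Longrightarrow> q \<in> P \<Longrightarrow> (fst p < fst q \<longleftrightarrow> fst (e1 p) < fst (e1 q)) \<and>
                     (snd p < snd q \<longleftrightarrow> snd (e1 p) < snd (e1 q))"
    using E1 unfolding embedding_def by blast
  have o2: "\<And>p q. p \<in> P \<Longrightarrow> q \<in> P \<Longrightarrow> (fst p < fst q \<longleftrightarrow> fst (e2 p) < fst (e2 q)) \<and>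
                     (snd p < snd q \<longleftrightarrow> snd (e2 p) < snd (e2 q))"
    using E2 unfolding embedding_def by blast
  have tycases: "ty x = SW \<or> ty x = NW \<or> ty x = NE \<or> ty x = SE" for x by (cases "ty x") auto
  have monof: "fst (e p) < fst (e q)" if pq: "p \<in> P" "q \<in> P" "fst p < fst q" for p q
  proof -
    have a1: "fst (e1 p) < fst (e1 q)" "fst (e2 p) < fst (e2 q)" using o1[OF pq(1,2)] o2[OF pq(1,2)] pq(3) by auto
    note kp = key[OF pq(1)] and kq = key[OF pq(2)]
    show ?thesis
    proof (cases "ty p = SW \<or> ty p = NW")
      case True
      have "fst (e p) \<le> fst (e1 p)" "fst (e p) \<le> fst (e2 p)"
        using leo_fst1[OF _ True] kp by auto
      then show ?thesis using a1 kq by auto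
    next
      case F: False
      then have pR: "ty p = NE \<or> ty p = SE" using tycases[of p] by auto
      show ?thesis
      proof (cases "ty q = NE \<or> ty q = SE")
        case True
        have "fst (e1 q) \<le> fst (e q)" "fst (e2 q) \<le> fst (e q)"
          using leo_fst2[OF _ True] kq by auto
        then show ?thesis using a1 kp by auto
      next
        case False
        then have "ty q = SW \<or> ty q = NW" using tycases[of q] by auto
        from F3a[OF sP plP tyP[OF pq(2)] tyP[OF pq(1)] this pR] pq(3) show ?thesis by simp
      qed
    qed
  qed
  have monoS: "snd (e p) < snd (e q)" if pq: "p \<in> P" "q \<in> P" "snd p < snd q" for p q
  proof -
    have a1: "snd (e1 p) < snd (e1 q)" "snd (e2 p) < snd (e2 q)" using o1[OF pq(1,2)] o2[OF pq(1,2)] pq(3) by auto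
    note kp = key[OF pq(1)] and kq = key[OF pq(2)]
    show ?thesis
    proof (cases "ty p = SW \<or> ty p = SE")
      case True
      have "snd (e p) \<le> snd (e1 p)" "snd (e p) \<le> snd (e2 p)"
        using leo_snd1[OF _ True] kp by auto
      then show ?thesis using a1 kq by auto
    next
      case F: False
      then have pR: "ty p = NE \<or> ty p = NW" using tycases[of p] by auto
      show ?thesis
      proof (cases "ty q = NE \<or> ty q = NW")
        case True
        have "snd (e1 q) \<le> snd (e q)" "snd (e2 q) \<le> snd (e q)"
          using leo_snd2[OF _ True] kq by auto
        then show ?thesis using a1 kp by auto
      next
        case False
        then have "ty q = SW \<or> ty q = SE" using tycases[of q] by auto
        from F3b[OF sP plP tyP[OF pq(2)] tyP[OF pq(1)] this pR] pq(3) show ?thesis by simp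
      qed
    qed
  qed
  have im: "e x \<in> Q" if "x \<in> P" for x
    using key[OF that] E1 E2 that unfolding embedding_def by auto
  have ordf: "fst p < fst q \<longleftrightarrow> fst (e p) < fst (e q)" if "p \<in> P" "q \<in> P" for p q
  proof
    assume "fst (e p) < fst (e q)"
    moreover have "\<not> fst q < fst p" using monof[OF that(2,1)] calculation by auto
    moreover have "fst p \<noteq> fst q" using plP that calculation unfolding pl_def by auto
    ultimately show "fst p < fst q" by simp
  qed (rule monof[OF that])
  have ords: "snd p < snd q \<longleftrightarrow> snd (e p) < snd (e q)" if "p \<in> P" "q \<in> P" for p q
  proof
    assume "snd (e p) < snd (e q)"
    moreover have "\<not> snd q < snd p" using monoS[OF that(2,1)] calculation by auto
    moreover have "snd p \<noteq> snd q" using plP that calculation unfolding pl_def by auto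
    ultimately show "snd p < snd q" by simp
  qed (rule monoS[OF that])
  have inj: "inj_on e P"
  proof (rule inj_onI)
    fix p q assume pq: "p \<in> P" "q \<in> P" "e p = e q"
    have "\<not> fst p < fst q" "\<not> fst q < fst p" using monof[OF pq(1,2)] monof[OF pq(2,1)] pq(3) by auto
    then have "fst p = fst q" by simp
    then show "p = q" using plP pq unfolding pl_def by blast
  qed
  have "embedding P Q e" unfolding embedding_def using inj im ordf ords by blast
  then show ?thesis unfolding P_def Q_def e_def .
qed

end
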